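(* For every integer $k\ge 1$ and all FDSs $A,B$, if $A^k=B^k$ then $A=B$.
   Context: A finite dynamical system (FDS) is a function $A:S_A\to S_A$ on a finite set $S_A$, considered up to isomorphism of functional graphs (vertex set $S_A$, arcs $x\to A(x)$). The product $AB$ is the function on $S_A\times S_B$ given by $(a,b)\mapsto(A(a),B(b))$, and $A^k$ denotes the $k$-fold product $A\times\cdots\times A$ (not the iterate/composition). *)

theory Defs
  imports Main
begin

definition is_fds :: "'a set \<Rightarrow> ('a \<Rightarrow> 'a) \<Rightarrow> bool" where
  "is_fds S f \<longleftrightarrow> finite S \<and> (\<forall>x\<in>S. f x \<in> S)"

definition fds_iso :: "'a set \<Rightarrow> ('a \<Rightarrow> 'a) \<Rightarrow> 'b set \<Rightarrow> ('b \<Rightarrow> 'b) \<Rightarrow> bool" where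
  "fds_iso S f T g \<longleftrightarrow> (\<exists>h. bij_betw h S T \<and> (\<forall>x\<in>S. h (f x) = g (h x)))"

text \<open>k-fold direct product A^k: states are k-tuples (lists of length k) over S,
  the map acts componentwise.\<close>
definition pow_carrier :: "nat \<Rightarrow> 'a set \<Rightarrow> 'a list set" where
  "pow_carrier k S = {xs. length xs = k \<and> set xs \<subseteq> S}"

definition pow_map :: "('a \<Rightarrow> 'a) \<Rightarrow> 'a list \<Rightarrow> 'a list" where
  "pow_map f = map f"

end

theory Submission
  imports Defs "HOL-Library.FuncSet"
begin

definition homs :: "nat set \<Rightarrow> (nat \<times> nat) set \<Rightarrow> 'a set \<Rightarrow> ('a \<Rightarrow> 'a) \<Rightarrow> (nat \<Rightarrow> 'a) set" where
  "homs V E S f = {h \<in> V \<rightarrow>\<^sub>E S. \<forall>(x,y)\<in>E. f (h x) = h y}"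

definition injs :: "nat set \<Rightarrow> (nat \<times> nat) set \<Rightarrow> 'a set \<Rightarrow> ('a \<Rightarrow> 'a) \<Rightarrow> (nat \<Rightarrow> 'a) set" where
  "injs V E S f = {h \<in> homs V E S f. inj_on h V}"

definition canon :: "nat set \<Rightarrow> (nat \<Rightarrow> nat) set" where
  "canon V = {r \<in> V \<rightarrow>\<^sub>E V. \<forall>x\<in>V. r x = (LEAST y. y \<in> V \<and> r y = r x)}"

definition qE :: "(nat \<Rightarrow> nat) \<Rightarrow> (nat \<times> nat) set \<Rightarrow> (nat \<times> nat) set" where
  "qE r E = (\<lambda>(x,y). (r x, r y)) ` E"

lemma finite_homs: "finite V \<Longrightarrow> finite S \<Longrightarrow> finite (homs V E S f)"
  unfolding homs_def by (rule finite_subset[OF _ finite_PiE[of V "\<lambda>_. S"]]) auto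

lemma finite_injs: "finite V \<Longrightarrow> finite S \<Longrightarrow> finite (injs V E S f)"
  unfolding injs_def using finite_homs[of V S E f] by (rule finite_subset[rotated]) auto

lemma finite_canon: "finite V \<Longrightarrow> finite (canon V)"
  unfolding canon_def by (rule finite_subset[OF _ finite_PiE[of V "\<lambda>_. V"]]) auto

lemma canon_idem:
  assumes "r \<in> canon V" "x \<in> V"
  shows "r (r x) = r x" "r x \<in> V"
proof -
  have e: "\<exists>y. y \<in> V \<and> r y = r x" using assms by auto
  have "r x = (LEAST y. y \<in> V \<and> r y = r x)" using assms unfolding canon_def by auto
  then show "r (r x) = r x" using LeastI_ex[OF e] by metis
  show "r x \<in> V" using assms unfolding canon_def by auto
qed

definition comp_r :: "nat set \<Rightarrow> (nat \<Rightarrow> nat) \<Rightarrow> (nat \<Rightarrow> 'a) \<Rightarrow> (nat \<Rightarrow> 'a)" where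
  "comp_r V r h = (\<lambda>x\<in>V. h (r x))"

lemma homs_decomp:
  assumes "E \<subseteq> V \<times> V"
  shows "homs V E S f = (\<Union>r\<in>canon V. comp_r V r ` injs (r ` V) (qE r E) S f)"
proof (rule equalityI)
  show "homs V E S f \<subseteq> (\<Union>r\<in>canon V. comp_r V r ` injs (r ` V) (qE r E) S f)"
  proof (rule subsetI)
    fix h assume h: "h \<in> homs V E S f"
    have hS: "h x \<in> S" if "x \<in> V" for x using h that unfolding homs_def by auto
    have hext: "h x = undefined" if "x \<notin> V" for x using h that unfolding homs_def by auto
    have hE: "f (h x) = h y" if "(x, y) \<in> E" for x y using h that unfolding homs_def by auto
    define r where "r = (\<lambda>x\<in>V. LEAST y. y \<in> V \<and> h y = h x)"
    have rV: "r x = (LEAST y. y \<in> V \<and> h y = h x)" if "x \<in> V" for x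
      using that unfolding r_def by simp
    have r1: "r x \<in> V \<and> h (r x) = h x" if "x \<in> V" for x
    proof -
      have e: "\<exists>y. y \<in> V \<and> h y = h x" using that by auto
      show ?thesis using LeastI_ex[OF e] rV[OF that] by simp
    qed
    have r2: "r y = r x \<longleftrightarrow> h y = h x" if "x \<in> V" "y \<in> V" for x y
    proof
      assume "r y = r x"
      then have "h (r y) = h (r x)" by simp
      then show "h y = h x" using r1[OF that(1)] r1[OF that(2)] by simp
    next
      assume "h y = h x"
      then show "r y = r x" using rV[OF that(1)] rV[OF that(2)] by simp
    qed
    have rc: "r \<in> canon V"
      unfolding canon_def
    proof (intro CollectI conjI ballI)
      show "r \<in> V \<rightarrow>\<^sub>E V" using r1 unfolding r_def by auto
      fix x assume x: "x \<in> V"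
      have "(\<lambda>y. y \<in> V \<and> r y = r x) = (\<lambda>y. y \<in> V \<and> h y = h x)"
        using r2 x by blast
      then show "r x = (LEAST y. y \<in> V \<and> r y = r x)" using rV[OF x] by simp
    qed
    define h' where "h' = restrict h (r ` V)"
    have h'r: "h' (r x) = h x" if "x \<in> V" for x
      unfolding h'_def using that r1[OF that] by simp
    have "h' \<in> injs (r ` V) (qE r E) S f"
      unfolding injs_def homs_def
    proof (intro CollectI conjI)
      show "h' \<in> r ` V \<rightarrow>\<^sub>E S"
      proof (rule PiE_I)
        fix z assume "z \<in> r ` V"
        then obtain x where "x \<in> V" "z = r x" by blast
        then show "h' z \<in> S" using h'r hS by simp
      next
        fix z assume "z \<notin> r ` V"
        then show "h' z = undefined" unfolding h'_def by simp
      qed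
      show "\<forall>(a, b)\<in>qE r E. f (h' a) = h' b"
      proof clarify
        fix a b assume "(a, b) \<in> qE r E"
        then obtain x y where xy: "(x, y) \<in> E" "a = r x" "b = r y" unfolding qE_def by force
        have "x \<in> V" "y \<in> V" using xy(1) assms by auto
        then show "f (h' a) = h' b" using xy h'r hE by simp
      qed
      show "inj_on h' (r ` V)"
      proof (rule inj_onI)
        fix a b assume a: "a \<in> r ` V" and b: "b \<in> r ` V" and eq: "h' a = h' b"
        obtain x where x: "x \<in> V" "a = r x" using a by blast
        obtain y where y: "y \<in> V" "b = r y" using b by blast
        have "h x = h y" using eq x y h'r by simp
        then show "a = b" using r2[OF y(1) x(1)] x y by simp
      qed
    qed
    moreover have "h = comp_r V r h'"
    proof
      fix x show "h x = comp_r V r h' x"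
      proof (cases "x \<in> V")
        case True
        then show ?thesis unfolding comp_r_def using h'r by simp
      next
        case False
        then show ?thesis unfolding comp_r_def using hext by simp
      qed
    qed
    ultimately show "h \<in> (\<Union>r\<in>canon V. comp_r V r ` injs (r ` V) (qE r E) S f)"
      using rc by blast
  qed
next
  show "(\<Union>r\<in>canon V. comp_r V r ` injs (r ` V) (qE r E) S f) \<subseteq> homs V E S f"
  proof (rule subsetI)
    fix H assume "H \<in> (\<Union>r\<in>canon V. comp_r V r ` injs (r ` V) (qE r E) S f)"
    then obtain r h' where r: "r \<in> canon V" and h': "h' \<in> injs (r ` V) (qE r E) S f"
      and H: "H = comp_r V r h'" by blast
    have h'S: "h' z \<in> S" if "z \<in> r ` V" for z using h' that unfolding injs_def homs_def by auto
    have h'E: "f (h' a) = h' b" if "(a, b) \<in> qE r E" for a b using h' that unfolding injs_def homs_def by auto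
    show "H \<in> homs V E S f"
      unfolding homs_def H
    proof (intro CollectI conjI)
      show "comp_r V r h' \<in> V \<rightarrow>\<^sub>E S" unfolding comp_r_def using h'S by auto
      show "\<forall>(x, y)\<in>E. f (comp_r V r h' x) = comp_r V r h' y"
      proof clarify
        fix x y assume e: "(x, y) \<in> E"
        then have "x \<in> V" "y \<in> V" using assms by auto
        moreover have "(r x, r y) \<in> qE r E" unfolding qE_def using e by force
        ultimately show "f (comp_r V r h' x) = comp_r V r h' y" unfolding comp_r_def using h'E by simp
      qed
    qed
  qed
qed

lemma canon_unique:
  assumes "r \<in> canon V" "x \<in> V" "\<And>y. y \<in> V \<Longrightarrow> r y = r x \<longleftrightarrow> h y = h x"
  shows "r x = (LEAST y. y \<in> V \<and> h y = h x)"
proof -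
  have "(\<lambda>y. y \<in> V \<and> r y = r x) = (\<lambda>y. y \<in> V \<and> h y = h x)" using assms(3) by auto
  moreover have "r x = (LEAST y. y \<in> V \<and> r y = r x)" using assms(1,2) unfolding canon_def by blast
  ultimately show ?thesis by simp
qed

lemma card_homs_sum:
  assumes "E \<subseteq> V \<times> V" "finite V" "finite S"
  shows "card (homs V E S f) = (\<Sum>r\<in>canon V. card (injs (r ` V) (qE r E) S f))"
proof -
  have inj: "inj_on (comp_r V r) (injs (r ` V) (qE r E) S f)" for r
  proof
    fix h1 h2 assume h1: "h1 \<in> injs (r ` V) (qE r E) S f" and h2: "h2 \<in> injs (r ` V) (qE r E) S f"
      and eq: "comp_r V r h1 = comp_r V r h2"
    show "h1 = h2"
    proof
      fix z show "h1 z = h2 z"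
      proof (cases "z \<in> r ` V")
        case True
        then obtain x where "x \<in> V" "z = r x" by auto
        then show ?thesis using fun_cong[OF eq, of x] unfolding comp_r_def by simp
      next
        case False
        then show ?thesis using h1 h2 unfolding injs_def homs_def by (auto simp: PiE_def extensional_def)
      qed
    qed
  qed
  have key: "r \<in> canon V \<Longrightarrow> h' \<in> injs (r ` V) (qE r E) S f \<Longrightarrow> x \<in> V \<Longrightarrow>
     r x = (LEAST y. y \<in> V \<and> comp_r V r h' y = comp_r V r h' x)" for r h' x
  proof (rule canon_unique)
    fix y assume r: "r \<in> canon V" and h': "h' \<in> injs (r ` V) (qE r E) S f" and x: "x \<in> V" and y: "y \<in> V"
    have "inj_on h' (r ` V)" using h' unfolding injs_def by auto
    then show "r y = r x \<longleftrightarrow> comp_r V r h' y = comp_r V r h' x"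
      using x y unfolding comp_r_def inj_on_def by auto
  qed
  have disj: "comp_r V r1 ` injs (r1 ` V) (qE r1 E) S f \<inter> comp_r V r2 ` injs (r2 ` V) (qE r2 E) S f = {}"
    if "r1 \<in> canon V" "r2 \<in> canon V" "r1 \<noteq> r2" for r1 r2
  proof (rule ccontr)
    assume "\<not> ?thesis"
    then obtain h1 h2 where h1: "h1 \<in> injs (r1 ` V) (qE r1 E) S f" and h2: "h2 \<in> injs (r2 ` V) (qE r2 E) S f"
      and eq: "comp_r V r1 h1 = comp_r V r2 h2" by blast
    have "r1 = r2"
    proof
      fix x show "r1 x = r2 x"
      proof (cases "x \<in> V")
        case True
        then show ?thesis using key[OF that(1) h1 True] key[OF that(2) h2 True] eq by simp
      next
        case False
        then show ?thesis using that(1,2) unfolding canon_def by (auto simp: PiE_def extensional_def)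
      qed
    qed
    then show False using that(3) by simp
  qed
  have "card (homs V E S f) = card (\<Union>r\<in>canon V. comp_r V r ` injs (r ` V) (qE r E) S f)"
    by (simp only: homs_decomp[OF assms(1)])
  also have "\<dots> = (\<Sum>r\<in>canon V. card (comp_r V r ` injs (r ` V) (qE r E) S f))"
    by (rule card_UN_disjoint) (use finite_canon[OF assms(2)] assms disj in \<open>auto intro!: finite_imageI finite_injs\<close>)
  also have "\<dots> = (\<Sum>r\<in>canon V. card (injs (r ` V) (qE r E) S f))"
    by (rule sum.cong) (auto simp: card_image[OF inj])
  finally show ?thesis .
qed

lemma injs_eq:
  assumes "finite S" "finite T"
    and H: "\<And>V E. finite V \<Longrightarrow> E \<subseteq> V \<times> V \<Longrightarrow> card (homs V E S f) = card (homs V E T g)"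
  shows "finite V \<Longrightarrow> E \<subseteq> V \<times> V \<Longrightarrow> card (injs V E S f) = card (injs V E T g)"
proof (induction "card V" arbitrary: V E rule: less_induct)
  case less
  define idV where "idV = (\<lambda>x\<in>V. x)"
  have idc: "idV \<in> canon V" unfolding canon_def
  proof (intro CollectI conjI ballI)
    show "idV \<in> V \<rightarrow>\<^sub>E V" unfolding idV_def by auto
    fix x assume x: "x \<in> V"
    have "(LEAST y. y \<in> V \<and> idV y = idV x) = x"
      by (rule Least_equality) (use x in \<open>auto simp: idV_def\<close>)
    then show "idV x = (LEAST y. y \<in> V \<and> idV y = idV x)" using x by (simp add: idV_def)
  qed
  have idV_img: "idV ` V = V" unfolding idV_def by auto
  have "qE idV E = (\<lambda>p. p) ` E" unfolding qE_def
    by (rule image_cong) (use less.prems in \<open>auto simp: idV_def\<close>)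
  then have idE: "qE idV E = E" by simp
  have IH: "card (injs (r ` V) (qE r E) S f) = card (injs (r ` V) (qE r E) T g)"
    if r: "r \<in> canon V - {idV}" for r
  proof -
    have rc: "r \<in> canon V" and rne: "r \<noteq> idV" using r by auto
    have "\<exists>x\<in>V. r x \<noteq> x"
    proof (rule ccontr)
      assume "\<not> ?thesis"
      then have "r = idV" using rc unfolding canon_def idV_def
        by (auto simp: PiE_def extensional_def fun_eq_iff)
      then show False using rne by simp
    qed
    then obtain x where x: "x \<in> V" "r x \<noteq> x" by auto
    have "\<not> inj_on r V"
      using canon_idem[OF rc x(1)] x unfolding inj_on_def by metis
    then have "card (r ` V) \<noteq> card V" using inj_on_iff_eq_card[OF less.prems(1), of r] by blast
    then have lt: "card (r ` V) < card V" using card_image_le[OF less.prems(1), of r] by simp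
    have sub: "qE r E \<subseteq> r ` V \<times> r ` V" using less.prems(2) unfolding qE_def by auto
    show ?thesis by (rule less.hyps[OF lt _ sub]) (use less.prems(1) in auto)
  qed
  have fc: "finite (canon V)" using finite_canon[OF less.prems(1)] .
  have "card (homs V E S f) = card (injs V E S f) + (\<Sum>r\<in>canon V - {idV}. card (injs (r ` V) (qE r E) S f))"
    using card_homs_sum[OF less.prems(2,1) assms(1), of f] sum.remove[OF fc idc, of "\<lambda>r. card (injs (r ` V) (qE r E) S f)"] idV_img idE by simp
  moreover have "card (homs V E T g) = card (injs V E T g) + (\<Sum>r\<in>canon V - {idV}. card (injs (r ` V) (qE r E) T g))"
    using card_homs_sum[OF less.prems(2,1) assms(2), of g] sum.remove[OF fc idc, of "\<lambda>r. card (injs (r ` V) (qE r E) T g)"] idV_img idE by simp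
  moreover have "(\<Sum>r\<in>canon V - {idV}. card (injs (r ` V) (qE r E) S f)) = (\<Sum>r\<in>canon V - {idV}. card (injs (r ` V) (qE r E) T g))"
    by (rule sum.cong) (auto simp: IH)
  ultimately show ?case using H[OF less.prems] by simp
qed

lemma card_homs_pow:
  assumes "E \<subseteq> V \<times> V" "finite V" "finite S"
  shows "card (homs V E (pow_carrier k S) (pow_map f)) = card (homs V E S f) ^ k"
proof -
  define Hs where "Hs = homs V E S f"
  define Phi where "Phi = (\<lambda>hs::(nat \<Rightarrow> 'a) list. \<lambda>x\<in>V. map (\<lambda>h. h x) hs)"
  have fin: "finite Hs" unfolding Hs_def using finite_homs assms by blast
  have "bij_betw Phi {hs. set hs \<subseteq> Hs \<and> length hs = k} (homs V E (pow_carrier k S) (pow_map f))"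
  proof (rule bij_betw_imageI)
    show "inj_on Phi {hs. set hs \<subseteq> Hs \<and> length hs = k}"
    proof
      fix hs1 hs2 assume h1: "hs1 \<in> {hs. set hs \<subseteq> Hs \<and> length hs = k}"
        and h2: "hs2 \<in> {hs. set hs \<subseteq> Hs \<and> length hs = k}" and eq: "Phi hs1 = Phi hs2"
      show "hs1 = hs2"
      proof (rule nth_equalityI)
        show "length hs1 = length hs2" using h1 h2 by simp
        fix i assume i: "i < length hs1"
        have m1: "hs1 ! i \<in> Hs" and m2: "hs2 ! i \<in> Hs" using h1 h2 i by auto
        show "hs1 ! i = hs2 ! i"
        proof
          fix x show "(hs1 ! i) x = (hs2 ! i) x"
          proof (cases "x \<in> V")
            case True
            then have "map (\<lambda>h. h x) hs1 = map (\<lambda>h. h x) hs2" using fun_cong[OF eq, of x] unfolding Phi_def by simp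
            then have "map (\<lambda>h. h x) hs1 ! i = map (\<lambda>h. h x) hs2 ! i" by simp
            then show ?thesis using i h1 h2 by simp
          next
            case False
            then show ?thesis using m1 m2 unfolding Hs_def homs_def by (auto simp: PiE_def extensional_def)
          qed
        qed
      qed
    qed
    show "Phi ` {hs. set hs \<subseteq> Hs \<and> length hs = k} = homs V E (pow_carrier k S) (pow_map f)"
    proof
      show "Phi ` {hs. set hs \<subseteq> Hs \<and> length hs = k} \<subseteq> homs V E (pow_carrier k S) (pow_map f)"
      proof (rule subsetI)
        fix H0 assume "H0 \<in> Phi ` {hs. set hs \<subseteq> Hs \<and> length hs = k}"
        then obtain hs where hs: "set hs \<subseteq> Hs" "k = length hs" and H0: "H0 = Phi hs" by auto
        show "H0 \<in> homs V E (pow_carrier k S) (pow_map f)"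
          unfolding H0
          unfolding homs_def
        proof (intro CollectI conjI)
          have hsS: "h x \<in> S" if "h \<in> set hs" "x \<in> V" for h x
          proof -
            have "h \<in> V \<rightarrow>\<^sub>E S" using hs(1) that(1) unfolding Hs_def homs_def by blast
            then show ?thesis using that(2) by (rule PiE_mem)
          qed
          show "Phi hs \<in> V \<rightarrow>\<^sub>E pow_carrier k S"
            unfolding Phi_def pow_carrier_def using hsS hs(2) by auto
          show "\<forall>(x, y)\<in>E. pow_map f (Phi hs x) = Phi hs y"
          proof clarify
            fix x y assume e: "(x, y) \<in> E"
            then have xy: "x \<in> V" "y \<in> V" using assms(1) by auto
            have "\<forall>h\<in>set hs. f (h x) = h y" using hs(1) e unfolding Hs_def homs_def by blast
            then show "pow_map f (Phi hs x) = Phi hs y" unfolding Phi_def pow_map_def using xy by simp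
          qed
        qed
      qed
      show "homs V E (pow_carrier k S) (pow_map f) \<subseteq> Phi ` {hs. set hs \<subseteq> Hs \<and> length hs = k}"
      proof
        fix H assume H: "H \<in> homs V E (pow_carrier k S) (pow_map f)"
        have Hl: "length (H x) = k" "set (H x) \<subseteq> S" if "x \<in> V" for x
          using H that unfolding homs_def pow_carrier_def by auto
        define hs where "hs = map (\<lambda>i. \<lambda>x\<in>V. H x ! i) [0..<k]"
        have "set hs \<subseteq> Hs"
        proof
          fix h assume "h \<in> set hs"
          then obtain i where i: "i < k" and h: "h = (\<lambda>x\<in>V. H x ! i)" unfolding hs_def by auto
          show "h \<in> Hs" unfolding Hs_def homs_def
          proof (intro CollectI conjI)
            have "H x ! i \<in> S" if "x \<in> V" for x
              using Hl[OF that] i nth_mem[of i "H x"] by auto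
            then show "h \<in> V \<rightarrow>\<^sub>E S" unfolding h by auto
            show "\<forall>(x, y)\<in>E. f (h x) = h y"
            proof clarify
              fix x y assume e: "(x, y) \<in> E"
              then have xy: "x \<in> V" "y \<in> V" using assms(1) by auto
              have "pow_map f (H x) = H y" using H e unfolding homs_def by auto
              then have "map f (H x) ! i = H y ! i" unfolding pow_map_def by simp
              then show "f (h x) = h y" using xy i Hl unfolding h by simp
            qed
          qed
        qed
        moreover have "length hs = k" unfolding hs_def by simp
        moreover have "Phi hs = H"
        proof
          fix x show "Phi hs x = H x"
          proof (cases "x \<in> V")
            case True
            then show ?thesis unfolding Phi_def hs_def using Hl[OF True] map_nth[of "H x"]
              by (simp add: o_def)
          next
            case False
            then show ?thesis using H unfolding Phi_def homs_def by (auto simp: PiE_def extensional_def)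
          qed
        qed
        ultimately show "H \<in> Phi ` {hs. set hs \<subseteq> Hs \<and> length hs = k}" by blast
      qed
    qed
  qed
  then have "card (homs V E (pow_carrier k S) (pow_map f)) = card {hs. set hs \<subseteq> Hs \<and> length hs = k}"
    by (simp add: bij_betw_same_card)
  also have "\<dots> = card Hs ^ k" using card_lists_length_eq[OF fin] by simp
  finally show ?thesis unfolding Hs_def .
qed

lemma homs_le:
  assumes "inj_on \<phi> P" "\<phi> ` P \<subseteq> Q" "\<forall>x\<in>P. \<phi> (F x) = G (\<phi> x)" "finite V" "finite Q" "E \<subseteq> V \<times> V"
  shows "card (homs V E P F) \<le> card (homs V E Q G)"
proof (rule card_inj_on_le)
  let ?Psi = "\<lambda>H. \<lambda>x\<in>V. \<phi> (H x)"
  show "inj_on ?Psi (homs V E P F)"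
  proof
    fix H1 H2 assume h1: "H1 \<in> homs V E P F" and h2: "H2 \<in> homs V E P F" and eq: "?Psi H1 = ?Psi H2"
    show "H1 = H2"
    proof
      fix x show "H1 x = H2 x"
      proof (cases "x \<in> V")
        case True
        then have "\<phi> (H1 x) = \<phi> (H2 x)" using fun_cong[OF eq, of x] by simp
        moreover have "H1 x \<in> P" "H2 x \<in> P" using h1 h2 True unfolding homs_def by auto
        ultimately show ?thesis using assms(1) unfolding inj_on_def by blast
      next
        case False
        then show ?thesis using h1 h2 unfolding homs_def by (auto simp: PiE_def extensional_def)
      qed
    qed
  qed
  show "?Psi ` homs V E P F \<subseteq> homs V E Q G"
  proof clarify
    fix H assume H: "H \<in> homs V E P F"
    show "?Psi H \<in> homs V E Q G" unfolding homs_def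
    proof (intro CollectI conjI)
      show "?Psi H \<in> V \<rightarrow>\<^sub>E Q" using H assms(2) unfolding homs_def by auto
      show "\<forall>(x, y)\<in>E. G (?Psi H x) = ?Psi H y"
      proof clarify
        fix x y assume e: "(x, y) \<in> E"
        then have xy: "x \<in> V" "y \<in> V" using assms(6) by auto
        have 1: "F (H x) = H y" "H x \<in> P" using H e xy unfolding homs_def by auto
        have "\<phi> (F (H x)) = G (\<phi> (H x))" using assms(3) 1(2) by blast
        then show "G (?Psi H x) = ?Psi H y" using xy 1(1) by simp
      qed
    qed
  qed
  show "finite (homs V E Q G)" using finite_homs assms(4,5) by blast
qed

lemma iso_homs_eq:
  assumes "bij_betw \<phi> P Q" "\<forall>x\<in>P. \<phi> (F x) = G (\<phi> x)" "\<forall>x\<in>P. F x \<in> P"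
    "finite V" "finite P" "finite Q" "E \<subseteq> V \<times> V"
  shows "card (homs V E P F) = card (homs V E Q G)"
proof (rule antisym)
  show "card (homs V E P F) \<le> card (homs V E Q G)"
    by (rule homs_le[OF bij_betw_imp_inj_on[OF assms(1)] _ assms(2,4,6,7)])
       (use bij_betw_imp_surj_on[OF assms(1)] in blast)
  define \<psi> where "\<psi> = the_inv_into P \<phi>"
  have b: "bij_betw \<psi> Q P" unfolding \<psi>_def by (rule bij_betw_the_inv_into[OF assms(1)])
  have c: "\<forall>y\<in>Q. \<psi> (G y) = F (\<psi> y)"
  proof
    fix y assume y: "y \<in> Q"
    have x: "\<psi> y \<in> P" "\<phi> (\<psi> y) = y" using y assms(1) b unfolding \<psi>_def
      by (auto simp: bij_betw_def f_the_inv_into_f)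
    have "\<phi> (F (\<psi> y)) = G (\<phi> (\<psi> y))" using assms(2) x(1) by blast
    then have "G y = \<phi> (F (\<psi> y))" using x(2) by simp
    moreover have "F (\<psi> y) \<in> P" using assms(3) x by blast
    then have "\<psi> (\<phi> (F (\<psi> y))) = F (\<psi> y)" unfolding \<psi>_def
      using assms(1) by (intro the_inv_into_f_f) (auto simp: bij_betw_def)
    ultimately show "\<psi> (G y) = F (\<psi> y)" by simp
  qed
  show "card (homs V E Q G) \<le> card (homs V E P F)"
    by (rule homs_le[OF bij_betw_imp_inj_on[OF b] _ c assms(4,5,7)])
       (use bij_betw_imp_surj_on[OF b] in blast)
qed

lemma embed:
  assumes "finite S" "\<forall>x\<in>S. f x \<in> S" "finite T"
    and H: "\<And>V E. finite V \<Longrightarrow> E \<subseteq> V \<times> V \<Longrightarrow> card (injs V E S f) = card (injs V E T g)"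
  shows "\<exists>h. inj_on h S \<and> h ` S \<subseteq> T \<and> (\<forall>x\<in>S. h (f x) = g (h x))"
proof -
  obtain e :: "'a \<Rightarrow> nat" and n where e: "e ` S = {i. i < n}" "inj_on e S"
    using finite_imp_inj_to_nat_seg[OF assms(1)] by blast
  define V where "V = e ` S"
  define E where "E = (\<lambda>x. (e x, e (f x))) ` S"
  have fV: "finite V" unfolding V_def using assms(1) by simp
  have EV: "E \<subseteq> V \<times> V" unfolding E_def V_def using assms(2) by auto
  define \<iota> where "\<iota> = (\<lambda>v\<in>V. the_inv_into S e v)"
  have "\<iota> \<in> injs V E S f" unfolding injs_def homs_def
  proof (intro CollectI conjI)
    show "\<iota> \<in> V \<rightarrow>\<^sub>E S" unfolding \<iota>_def V_def using e(2) by (auto simp: the_inv_into_f_f)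
    show "\<forall>(x, y)\<in>E. f (\<iota> x) = \<iota> y"
    proof clarify
      fix a b assume "(a, b) \<in> E"
      then obtain x where x: "x \<in> S" "a = e x" "b = e (f x)" unfolding E_def by blast
      have fx: "f x \<in> S" using assms(2) x(1) by blast
      have "\<iota> a = x" unfolding \<iota>_def V_def using x e(2) by (simp add: the_inv_into_f_f)
      moreover have "\<iota> b = f x" unfolding \<iota>_def V_def using x fx e(2) by (simp add: the_inv_into_f_f)
      ultimately show "f (\<iota> a) = \<iota> b" by simp
    qed
    show "inj_on \<iota> V" unfolding \<iota>_def V_def inj_on_def using e(2) by (auto simp: the_inv_into_f_f)
  qed
  then have "injs V E S f \<noteq> {}" by blast
  then have "card (injs V E S f) \<noteq> 0" using finite_injs[OF fV assms(1)] by simp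
  then have "card (injs V E T g) \<noteq> 0" using H[OF fV EV] by simp
  then have "injs V E T g \<noteq> {}" by (metis card.empty)
  then obtain h' where h': "h' \<in> injs V E T g" by blast
  show ?thesis
  proof (intro exI conjI)
    show "inj_on (h' \<circ> e) S" using h' e(2) unfolding injs_def V_def by (auto intro: comp_inj_on)
    show "(h' \<circ> e) ` S \<subseteq> T" using h' unfolding injs_def homs_def V_def by auto
    show "\<forall>x\<in>S. (h' \<circ> e) (f x) = g ((h' \<circ> e) x)"
    proof
      fix x assume x: "x \<in> S"
      have "(e x, e (f x)) \<in> E" unfolding E_def using x by blast
      then show "(h' \<circ> e) (f x) = g ((h' \<circ> e) x)" using h' unfolding injs_def homs_def by auto
    qed
  qed
qed

theorem mainTheorem3:
  fixes S :: "'a set" and f :: "'a \<Rightarrow> 'a" and T :: "'b set" and g :: "'b \<Rightarrow> 'b"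
    and k :: nat
  assumes "k \<ge> 1"
    and "is_fds S f" and "is_fds T g"
    and "fds_iso (pow_carrier k S) (pow_map f) (pow_carrier k T) (pow_map g)"
  shows "fds_iso S f T g"
proof -
  have fS: "finite S" "\<forall>x\<in>S. f x \<in> S" and fT: "finite T" "\<forall>x\<in>T. g x \<in> T"
    using assms(2,3) unfolding is_fds_def by auto
  obtain \<phi> where phi: "bij_betw \<phi> (pow_carrier k S) (pow_carrier k T)"
    "\<forall>x\<in>pow_carrier k S. \<phi> (pow_map f x) = pow_map g (\<phi> x)"
    using assms(4) unfolding fds_iso_def by blast
  have finP: "finite (pow_carrier k A)" if "finite A" for A :: "'c set"
    unfolding pow_carrier_def using finite_lists_length_eq[OF that, of k] by (simp add: conj_commute)
  have clos: "\<forall>x\<in>pow_carrier k S. pow_map f x \<in> pow_carrier k S"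
    using fS(2) unfolding pow_carrier_def pow_map_def by auto
  have homeq: "card (homs V E S f) = card (homs V E T g)" if "finite V" "E \<subseteq> V \<times> V" for V E
  proof -
    have "card (homs V E S f) ^ k = card (homs V E (pow_carrier k S) (pow_map f))"
      using card_homs_pow[OF that(2,1) fS(1)] by simp
    also have "\<dots> = card (homs V E (pow_carrier k T) (pow_map g))"
      by (rule iso_homs_eq[OF phi clos that(1) finP[OF fS(1)] finP[OF fT(1)] that(2)])
    also have "\<dots> = card (homs V E T g) ^ k"
      using card_homs_pow[OF that(2,1) fT(1)] by simp
    finally show ?thesis using assms(1) power_eq_iff_eq_base[of k "card (homs V E S f)" "card (homs V E T g)"] by simp
  qed
  have ieq: "card (injs V E S f) = card (injs V E T g)" if "finite V" "E \<subseteq> V \<times> V" for V E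
    by (rule injs_eq[OF fS(1) fT(1) homeq that])
  obtain h where h: "inj_on h S" "h ` S \<subseteq> T" "\<forall>x\<in>S. h (f x) = g (h x)"
    using embed[OF fS fT(1) ieq] by blast
  obtain h2 where h2: "inj_on h2 T" "h2 ` T \<subseteq> S"
    using embed[OF fT fS(1) ieq[symmetric]] by blast
  have "card S \<le> card T" using card_inj_on_le[OF h(1,2) fT(1)] .
  moreover have "card T \<le> card S" using card_inj_on_le[OF h2(1,2) fS(1)] .
  ultimately have "card (h ` S) = card T" using card_image[OF h(1)] by simp
  then have "h ` S = T" using card_subset_eq[OF fT(1) h(2)] by simp
  then have "bij_betw h S T" using h(1) by (simp add: bij_betw_def)
  then show ?thesis unfolding fds_iso_def using h(3) by blast
qed

end
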